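(* Let $\Gamma\subset\mathbb R^{n+1}$ be an open, convex, symmetric proper subcone with vertex at the origin containing $\Gamma^+$, and $f\in C^\infty(\Gamma)\cap C^0(\bar\Gamma)$ symmetric with $f_\ell=\partial f/\partial\lambda_\ell>0$ in $\Gamma$, $f$ concave in $\Gamma$, and $\sum_{\ell=1}^{n+1}f_\ell\lambda_\ell\ge-K_0(1+\sum_{\ell=1}^{n+1}f_\ell)$ for all $\lambda\in\Gamma$, for a constant $K_0$. Let $u$ be an admissible solution of $f(\lambda[\nabla^2u+\chi],-u_t)=\psi(x,t)$ in $M_T$, and at a point of $M_T$ let $\lambda=(\lambda_1,\dots,\lambda_n)=\lambda(U)$ be the eigenvalues of $U=\nabla^2u+\chi$, with $f_i=f_i(\lambda,-u_t)$ for $1\le i\le n$ and $f_\tau=f_{n+1}(\lambda,-u_t)$. Then for any index $1\le r\le n$ and any $\epsilon>0$, $$\sum_{i=1}^n f_i|\lambda_i|\le\epsilon\sum_{i\ne r}f_i\lambda_i^2+C\big(\epsilon,|u_t|,K_0,\sup_{M_T}\psi\big)\Big(1+\sum_{i=1}^n f_i+f_\tau\Big),$$ where the constant depends only on $\epsilon$, $|u_t|$, $K_0$, $\sup_{M_T}\psi$ (and $f$).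
   Context: $(M^n,g)$ is a compact Riemannian manifold with smooth boundary, $M_T=M\times(0,T]$, $\chi$ a smooth $(0,2)$-tensor, $\nabla^2u$ the spatial Hessian and $u_t$ the time derivative; eigenvalues are with respect to $g$. $\Gamma^+=\{\lambda\in\mathbb R^{n+1}:\lambda_\ell>0 \ \forall\ell\}$. $u$ admissible means $(\lambda[\nabla^2u+\chi],-u_t)\in\Gamma$ in $M_T$. *)

theory Defs
  imports "HOL-Analysis.Analysis"
begin

definition pd :: "(real^'a \<Rightarrow> real) \<Rightarrow> real^'a \<Rightarrow> 'a \<Rightarrow> real" where
  "pd f x l = deriv (\<lambda>t. f (x + t *\<^sub>R axis l 1)) 0"

fun iter_pd :: "'a list \<Rightarrow> (real^'a \<Rightarrow> real) \<Rightarrow> real^'a \<Rightarrow> real" where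
  "iter_pd [] f = f"
| "iter_pd (l # ls) f = (\<lambda>x. pd (iter_pd ls f) x l)"

definition smooth_on :: "(real^'a) set \<Rightarrow> (real^'a \<Rightarrow> real) \<Rightarrow> bool" where
  "smooth_on S f \<longleftrightarrow> (\<forall>ls. continuous_on S (iter_pd ls f) \<and>
     (\<forall>x\<in>S. \<forall>l. (\<lambda>t. iter_pd ls f (x + t *\<^sub>R axis l 1)) differentiable (at 0)))"

definition permv :: "('a \<Rightarrow> 'a) \<Rightarrow> real^'a \<Rightarrow> real^'a" where
  "permv p x = (\<chi> i. x $ p i)"

definition positive_cone :: "(real^'a) set" where
  "positive_cone = {x. \<forall>i. x $ i > 0}"

end

theory Submission
  imports Defs
begin

lemma bexp: "(\<Sum>l\<in>UNIV. (d::real^'a) $ l *\<^sub>R axis l 1) = d"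
  by (simp add: vec_eq_iff axis_def if_distrib cong: if_cong)

lemma deriv_lim:
  fixes g :: "real \<Rightarrow> real"
  assumes "g differentiable (at 0)"
  shows "((\<lambda>t. (g 0 - g (c*t)) / t) \<longlongrightarrow> - (c * deriv g 0)) (at_right 0)"
proof -
  have d: "(g has_real_derivative deriv g 0) (at (c*0))"
    using assms DERIV_deriv_iff_real_differentiable by simp
  have "((\<lambda>t. c*t) has_real_derivative c) (at 0)"
    by (auto intro!: derivative_eq_intros)
  from DERIV_chain2[OF d this]
  have "((\<lambda>t. g (c*t)) has_real_derivative deriv g 0 * c) (at 0)" .
  then have "((\<lambda>y. (g (c*y) - g (c*0)) / (y - 0)) \<longlongrightarrow> deriv g 0 * c) (at 0)"
    using has_field_derivative_iff[THEN iffD1, OF \<open>((\<lambda>t. g (c*t)) has_real_derivative deriv g 0 * c) (at 0)\<close>] by simp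
  then have "((\<lambda>y. - ((g (c*y) - g 0) / y)) \<longlongrightarrow> - (deriv g 0 * c)) (at 0)"
    by (auto intro: tendsto_minus)
  then have "((\<lambda>y. - ((g (c*y) - g 0) / y)) \<longlongrightarrow> - (deriv g 0 * c)) (at_right 0)"
    by (rule tendsto_mono[OF at_le, rotated]) auto
  then show ?thesis by (simp add: minus_divide_left mult.commute)
qed

lemma grad_ineq:
  fixes f :: "real^'a \<Rightarrow> real"
  assumes G: "open G" and cf: "concave_on G f" and x: "x \<in> G" and y: "y \<in> G"
    and diff: "\<And>l. (\<lambda>t. f (x + t *\<^sub>R axis l 1)) differentiable (at 0)"
  shows "f y \<le> f x + (\<Sum>l\<in>UNIV. pd f x l * (y$l - x$l))"
proof -
  define d where "d = y - x"
  define N where "N = real CARD('a)"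
  have N: "N > 0" unfolding N_def by simp
  have N1: "N \<ge> 1" unfolding N_def by (simp add: Suc_le_eq)
  define q where "q t l = x + (-(N*d$l)*t) *\<^sub>R axis l (1::real)" for t l
  define R where "R t = (\<Sum>l\<in>UNIV. (1/N) * ((f x - f (x + (-(N*d$l)*t) *\<^sub>R axis l 1)) / t))" for t
  have lim: "(R \<longlongrightarrow> (\<Sum>l\<in>UNIV. (1/N) * (- ((-(N*d$l)) * pd f x l)))) (at_right 0)"
    unfolding R_def
  proof (intro tendsto_sum tendsto_mult_left)
    fix l
    show "((\<lambda>t. (f x - f (x + (-(N*d$l)*t) *\<^sub>R axis l 1)) / t) \<longlongrightarrow> - ((-(N*d$l)) * pd f x l)) (at_right 0)"
      using deriv_lim[OF diff[of l], of "-(N*d$l)"] by (simp add: pd_def)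
  qed
  have limval: "(\<Sum>l\<in>UNIV. (1/N) * (- ((-(N*d$l)) * pd f x l))) = (\<Sum>l\<in>UNIV. pd f x l * (y$l - x$l))"
    using N by (intro sum.cong) (auto simp: d_def)
  obtain e where e: "e > 0" "ball x e \<subseteq> G" using G x open_contains_ball by blast
  define b where "b = min 1 (e / (N * (norm d + 1)))"
  have b: "b > 0"
  proof -
    have "N * (norm d + 1) > 0" using N by (simp add: add_nonneg_pos)
    then show ?thesis using e by (simp add: b_def)
  qed
  have ev: "eventually (\<lambda>t. f y - f x \<le> R t) (at_right 0)"
    unfolding eventually_at_right_field
  proof (intro exI[of _ b] conjI allI impI b)
    fix t :: real assume t0: "0 < t" and tb: "t < b"
    have t1: "t < 1" using tb by (simp add: b_def)
    have pp: "N * (norm d + 1) > 0" using N by (simp add: add_nonneg_pos)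
    have te: "t * (N * (norm d + 1)) < e" using tb pp
      by (simp add: b_def pos_less_divide_eq)
    have nd: "norm d \<ge> 0" by simp
    have tN: "t * N > 0" using t0 N by simp
    have tNd: "t * N * norm d < e" using te tN by (simp add: algebra_simps)
    have inG: "x + z \<in> G" if "norm z < e" for z
    proof -
      have "x + z \<in> ball x e" using that by (simp add: dist_norm)
      then show ?thesis using e(2) by blast
    qed
    have tt: "t \<le> t * N" using mult_left_mono[OF N1, of t] t0 by simp
    have xm: "x - t *\<^sub>R d \<in> G"
    proof -
      have "norm (- (t *\<^sub>R d)) = t * norm d" using t0 by simp
      also have "\<dots> \<le> t * N * norm d" using tt nd by (rule mult_right_mono)
      also have "\<dots> < e" using tNd .
      finally have "norm (- (t *\<^sub>R d)) < e" .
      from inG[OF this] show ?thesis by simp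
    qed
    have qG: "q t l \<in> G" for l
    proof -
      have "norm ((-(N*d$l)*t) *\<^sub>R axis l (1::real)) = N * \<bar>d$l\<bar> * t"
        using t0 N by (simp add: abs_mult)
      also have "\<dots> \<le> N * norm d * t" using t0 N component_le_norm_cart[of d l]
        by (intro mult_right_mono mult_left_mono) auto
      also have "\<dots> = t * N * norm d" by simp
      also have "\<dots> < e" using tNd .
      finally show ?thesis unfolding q_def by (rule inG)
    qed
    have xp: "x + t *\<^sub>R d = (1 - t) *\<^sub>R x + t *\<^sub>R y" by (simp add: d_def algebra_simps)
    have a: "f (x + t *\<^sub>R d) \<ge> (1 - t) * f x + t * f y"
      unfolding xp using concave_onD[OF cf, of t x y] t0 t1 x y by simp
    have xpG: "x + t *\<^sub>R d \<in> G" unfolding xp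
      using concave_on_imp_convex[OF cf] x y t0 t1 by (simp add: convex_alt)
    have bb: "f ((1 - 1/2) *\<^sub>R (x + t *\<^sub>R d) + (1/2) *\<^sub>R (x - t *\<^sub>R d)) \<ge>
        (1 - 1/2) * f (x + t *\<^sub>R d) + (1/2) * f (x - t *\<^sub>R d)"
      using concave_onD[OF cf, of "1/2" "x + t *\<^sub>R d" "x - t *\<^sub>R d"] xpG xm by simp
    have "(1 - 1/2) *\<^sub>R (x + t *\<^sub>R d) + (1/2::real) *\<^sub>R (x - t *\<^sub>R d) = x"
      by (simp add: vec_eq_iff field_simps)
    then have b2: "f x \<ge> (1/2) * f (x + t *\<^sub>R d) + (1/2) * f (x - t *\<^sub>R d)"
      using bb by simp
    have sumq: "(\<Sum>l\<in>UNIV. (1/N) *\<^sub>R q t l) = x - t *\<^sub>R d"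
    proof (unfold vec_eq_iff, intro allI)
      fix i
      have "(\<Sum>l\<in>UNIV. (1/N) *\<^sub>R q t l) $ i = (\<Sum>l\<in>UNIV. (1/N) * x $ i + (if l = i then - (d$i) * t else 0))"
        unfolding q_def sum_component using N by (intro sum.cong) (auto simp: axis_def field_simps)
      also have "\<dots> = x $ i - t * d $ i"
        using N by (simp add: sum.distrib N_def)
      finally show "(\<Sum>l\<in>UNIV. (1/N) *\<^sub>R q t l) $ i = (x - t *\<^sub>R d) $ i" by simp
    qed
    have c: "f (x - t *\<^sub>R d) \<ge> (\<Sum>l\<in>UNIV. (1/N) * f (q t l))"
      using concave_on_sum[OF _ _ cf, of UNIV "\<lambda>l. 1/N" "q t"] qG N sumq
      by (simp add: N_def)
    have "f y - f x \<le> (f (x + t *\<^sub>R d) - f x) / t"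
    proof -
      have "(f y - f x) * t \<le> f (x + t *\<^sub>R d) - f x" using a by (simp add: algebra_simps)
      then show ?thesis using t0 by (simp add: pos_le_divide_eq)
    qed
    also have "\<dots> \<le> (f x - f (x - t *\<^sub>R d)) / t"
      using b2 t0 by (intro divide_right_mono) auto
    also have "\<dots> \<le> (f x - (\<Sum>l\<in>UNIV. (1/N) * f (q t l))) / t"
      using c t0 by (intro divide_right_mono) auto
    also have "\<dots> = R t"
    proof -
      have "(\<Sum>l\<in>(UNIV::'a set). (1/N) * f x) = f x" using N by (simp add: N_def)
      then have "f x - (\<Sum>l\<in>UNIV. (1/N) * f (q t l)) = (\<Sum>l\<in>UNIV. (1/N) * (f x - f (q t l)))"
        by (simp add: sum_subtractf right_diff_distrib)
      then show ?thesis unfolding R_def q_def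
        by (simp add: sum_divide_distrib)
    qed
    finally show "f y - f x \<le> R t" .
  qed
  have "f y - f x \<le> (\<Sum>l\<in>UNIV. pd f x l * (y$l - x$l))"
    using tendsto_le[OF _ lim tendsto_const ev] limval by simp
  then show ?thesis by simp
qed

lemma amgm: fixes e l :: real assumes "e > 0" shows "2 * \<bar>l\<bar> \<le> e * l^2 + 1/e"
proof -
  have "0 \<le> (e * \<bar>l\<bar> - 1)^2 / e" using assms by simp
  also have "\<dots> = e * l^2 + 1/e - 2 * \<bar>l\<bar>"
    using assms by (simp add: field_simps power2_eq_square)
  finally show ?thesis by simp
qed

theorem proposition2p3:
  fixes \<Gamma> :: "(real^'a) set" and f :: "real^'a \<Rightarrow> real"
    and \<tau> :: 'a and K\<^sub>0 :: real
  assumes n_pos: "CARD('a) \<ge> 2"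
    and open_G: "open \<Gamma>" and convex_G: "convex \<Gamma>"
    and cone_G: "\<And>x t. x \<in> \<Gamma> \<Longrightarrow> t > 0 \<Longrightarrow> t *\<^sub>R x \<in> \<Gamma>"
    and sym_G: "\<And>p x. p permutes UNIV \<Longrightarrow> x \<in> \<Gamma> \<Longrightarrow> permv p x \<in> \<Gamma>"
    and proper_G: "\<Gamma> \<noteq> UNIV"
    and pos_sub: "positive_cone \<subseteq> \<Gamma>"
    and smooth_f: "smooth_on \<Gamma> f"
    and cont_f: "continuous_on (closure \<Gamma>) f"
    and sym_f: "\<And>p x. p permutes UNIV \<Longrightarrow> x \<in> \<Gamma> \<Longrightarrow> f (permv p x) = f x"
    and fpos: "\<And>x l. x \<in> \<Gamma> \<Longrightarrow> pd f x l > 0"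
    and concave_f: "concave_on \<Gamma> f"
    and struct: "\<And>x. x \<in> \<Gamma> \<Longrightarrow>
        (\<Sum>l\<in>UNIV. pd f x l * x $ l) \<ge> - K\<^sub>0 * (1 + (\<Sum>l\<in>UNIV. pd f x l))"
  shows "\<forall>\<epsilon>>0. \<forall>B \<Psi>. \<exists>C. \<forall>x\<in>\<Gamma>. \<forall>r. r \<noteq> \<tau> \<longrightarrow> \<bar>x $ \<tau>\<bar> \<le> B \<longrightarrow> f x \<le> \<Psi> \<longrightarrow>
      (\<Sum>i\<in>UNIV-{\<tau>}. pd f x i * \<bar>x $ i\<bar>)
        \<le> \<epsilon> * (\<Sum>i\<in>UNIV-{\<tau>,r}. pd f x i * (x $ i)\<^sup>2)
           + C * (1 + (\<Sum>i\<in>UNIV-{\<tau>}. pd f x i) + pd f x \<tau>)"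
proof (intro allI impI)
  fix \<epsilon> :: real and B \<Psi> :: real
  assume ep: "\<epsilon> > 0"
  define y1 :: "real^'a" where "y1 = (\<chi> i. 1)"
  have y1G: "y1 \<in> \<Gamma>" using pos_sub by (auto simp: positive_cone_def y1_def)
  define C where "C = \<bar>\<Psi> - f y1\<bar> + \<bar>K\<^sub>0\<bar> + 1 + 1/\<epsilon> + \<bar>B\<bar>"
  show "\<exists>C. \<forall>x\<in>\<Gamma>. \<forall>r. r \<noteq> \<tau> \<longrightarrow> \<bar>x $ \<tau>\<bar> \<le> B \<longrightarrow> f x \<le> \<Psi> \<longrightarrow>
      (\<Sum>i\<in>UNIV-{\<tau>}. pd f x i * \<bar>x $ i\<bar>)
        \<le> \<epsilon> * (\<Sum>i\<in>UNIV-{\<tau>,r}. pd f x i * (x $ i)\<^sup>2)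
           + C * (1 + (\<Sum>i\<in>UNIV-{\<tau>}. pd f x i) + pd f x \<tau>)"
  proof (intro exI[of _ C] ballI allI impI)
    fix x r assume xG: "x \<in> \<Gamma>" and rt: "r \<noteq> \<tau>" and xB: "\<bar>x $ \<tau>\<bar> \<le> B" and fP: "f x \<le> \<Psi>"
    define a where "a i = pd f x i" for i
    have apos: "a i > 0" for i using fpos[OF xG] by (simp add: a_def)
    define S where "S = UNIV - {\<tau>}"
    have rS: "r \<in> S" using rt by (simp add: S_def)
    have S': "UNIV - {\<tau>, r} = S - {r}" by (auto simp: S_def)
    define F where "F = (\<Sum>i\<in>S. a i)"
    define T where "T = a \<tau>"
    define P where "P = (\<Sum>i\<in>S-{r}. a i * (x$i)^2)"
    have F0: "F \<ge> 0" unfolding F_def using apos by (simp add: sum_nonneg less_imp_le)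
    have T0: "T \<ge> 0" unfolding T_def using apos by (simp add: less_imp_le)
    have F'F: "(\<Sum>i\<in>S-{r}. a i) \<le> F" unfolding F_def
      using apos by (intro sum_mono2) (auto simp: less_imp_le)
    have tot: "(\<Sum>l\<in>UNIV. a l * x $ l) = T * x $ \<tau> + (\<Sum>i\<in>S. a i * x$i)"
      unfolding S_def T_def by (simp add: sum.remove)
    have totA: "(\<Sum>l\<in>UNIV. a l) = T + F"
      unfolding S_def T_def F_def by (simp add: sum.remove)
    have diff: "\<And>l. (\<lambda>t. f (x + t *\<^sub>R axis l 1)) differentiable (at 0)"
      using smooth_f xG unfolding smooth_on_def
      by (metis iter_pd.simps(1))
    have gi: "f y1 \<le> f x + (\<Sum>l\<in>UNIV. a l * (y1$l - x$l))"
      using grad_ineq[OF open_G concave_f xG y1G diff] by (simp add: a_def)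
    have "(\<Sum>l\<in>UNIV. a l * (y1$l - x$l)) = (\<Sum>l\<in>UNIV. a l) - (\<Sum>l\<in>UNIV. a l * x $ l)"
      by (simp add: y1_def right_diff_distrib sum_subtractf)
    with gi have up: "(\<Sum>l\<in>UNIV. a l * x $ l) \<le> f x - f y1 + T + F" using totA by simp
    have lo: "(\<Sum>l\<in>UNIV. a l * x $ l) \<ge> - K\<^sub>0 * (1 + T + F)"
      using struct[OF xG] totA by (simp add: a_def add.assoc)
    have TB: "\<bar>T * x $ \<tau>\<bar> \<le> T * \<bar>B\<bar>"
      using xB T0 by (simp add: abs_mult mult_left_mono)
    have pw1: "a i * \<bar>x$i\<bar> \<le> a i * x$i + (\<epsilon> * (a i * (x$i)^2) + a i / \<epsilon>)" for i
    proof -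
      have "\<bar>x$i\<bar> \<le> x$i + (\<epsilon> * (x$i)^2 + 1 / \<epsilon>)" using amgm[OF ep, of "x$i"] by linarith
      from mult_left_mono[OF this, of "a i"] apos[of i] show ?thesis by (simp add: algebra_simps)
    qed
    have pw2: "a i * \<bar>x$i\<bar> \<le> - (a i * x$i) + (\<epsilon> * (a i * (x$i)^2) + a i / \<epsilon>)" for i
    proof -
      have "\<bar>x$i\<bar> \<le> - x$i + (\<epsilon> * (x$i)^2 + 1 / \<epsilon>)" using amgm[OF ep, of "x$i"] by linarith
      from mult_left_mono[OF this, of "a i"] apos[of i] show ?thesis by (simp add: algebra_simps)
    qed
    have rest: "(\<Sum>i\<in>S-{r}. \<epsilon> * (a i * (x$i)^2) + a i / \<epsilon>) = \<epsilon> * P + (\<Sum>i\<in>S-{r}. a i) / \<epsilon>"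
      unfolding P_def by (simp add: sum.distrib sum_distrib_left sum_divide_distrib)
    have restle: "(\<Sum>i\<in>S-{r}. a i) / \<epsilon> \<le> F / \<epsilon>" using F'F ep by (simp add: divide_right_mono)
    have splitA: "(\<Sum>i\<in>S. a i * \<bar>x$i\<bar>) = a r * \<bar>x$r\<bar> + (\<Sum>i\<in>S-{r}. a i * \<bar>x$i\<bar>)"
      using rS by (simp add: sum.remove)
    have splitL: "(\<Sum>i\<in>S. a i * x$i) = a r * x$r + (\<Sum>i\<in>S-{r}. a i * x$i)"
      using rS by (simp add: sum.remove)
    have Cge: "C * (1 + F + T) \<ge> \<bar>\<Psi> - f y1\<bar> + \<bar>K\<^sub>0\<bar> * (1 + T + F) + (1 + 1/\<epsilon>) * F + (1 + \<bar>B\<bar>) * T"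
    proof -
      have e0: "1/\<epsilon> \<ge> 0" using ep by simp
      have "C * (1 + F + T) = C + C * F + C * T" by (simp add: algebra_simps)
      moreover have "C * F \<ge> (\<bar>K\<^sub>0\<bar> + 1 + 1/\<epsilon>) * F" using F0 e0 unfolding C_def
        by (intro mult_right_mono) auto
      moreover have "C * T \<ge> (\<bar>K\<^sub>0\<bar> + 1 + \<bar>B\<bar>) * T" using T0 e0 unfolding C_def
        by (intro mult_right_mono) auto
      moreover have "C \<ge> \<bar>\<Psi> - f y1\<bar> + \<bar>K\<^sub>0\<bar>" using e0 unfolding C_def by simp
      ultimately show ?thesis by (simp add: algebra_simps)
    qed
    have K0: "- K\<^sub>0 * (1 + T + F) \<ge> - (\<bar>K\<^sub>0\<bar> * (1 + T + F))"
      using F0 T0 by (simp add: mult_right_mono)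
    have main: "(\<Sum>i\<in>S. a i * \<bar>x$i\<bar>) \<le> \<epsilon> * P + C * (1 + F + T)"
    proof (cases "x $ r \<ge> 0")
      case True
      have "(\<Sum>i\<in>S-{r}. a i * \<bar>x$i\<bar>) \<le> (\<Sum>i\<in>S-{r}. a i * x$i + (\<epsilon> * (a i * (x$i)^2) + a i / \<epsilon>))"
        by (intro sum_mono pw1)
      also have "\<dots> = (\<Sum>i\<in>S-{r}. a i * x$i) + (\<epsilon> * P + (\<Sum>i\<in>S-{r}. a i) / \<epsilon>)"
        using rest by (simp add: sum.distrib)
      finally have h: "(\<Sum>i\<in>S-{r}. a i * \<bar>x$i\<bar>) \<le> (\<Sum>i\<in>S-{r}. a i * x$i) + (\<epsilon> * P + (\<Sum>i\<in>S-{r}. a i) / \<epsilon>)" .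
      have "a r * \<bar>x$r\<bar> = a r * x$r" using True by simp
      then have "(\<Sum>i\<in>S. a i * \<bar>x$i\<bar>) \<le> (\<Sum>i\<in>S. a i * x$i) + \<epsilon> * P + F / \<epsilon>"
        using splitA splitL h restle by linarith
      also have "\<dots> \<le> \<bar>\<Psi> - f y1\<bar> + T + F + T * \<bar>B\<bar> + \<epsilon> * P + F / \<epsilon>"
        using up tot TB fP by linarith
      also have "\<dots> \<le> \<epsilon> * P + C * (1 + F + T)"
        using Cge F0 T0 \<open>-K\<^sub>0 * (1+T+F) \<ge> _\<close> abs_ge_zero[of K\<^sub>0] 
        by (simp add: algebra_simps) (smt (verit) mult_nonneg_nonneg F0 T0 abs_ge_zero)
      finally show ?thesis .
    next
      case False
      have "(\<Sum>i\<in>S-{r}. a i * \<bar>x$i\<bar>) \<le> (\<Sum>i\<in>S-{r}. - (a i * x$i) + (\<epsilon> * (a i * (x$i)^2) + a i / \<epsilon>))"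
        by (intro sum_mono pw2)
      also have "\<dots> = - (\<Sum>i\<in>S-{r}. a i * x$i) + (\<epsilon> * P + (\<Sum>i\<in>S-{r}. a i) / \<epsilon>)"
        using rest by (simp add: sum.distrib sum_subtractf)
      finally have h: "(\<Sum>i\<in>S-{r}. a i * \<bar>x$i\<bar>) \<le> - (\<Sum>i\<in>S-{r}. a i * x$i) + (\<epsilon> * P + (\<Sum>i\<in>S-{r}. a i) / \<epsilon>)" .
      have "a r * \<bar>x$r\<bar> = - (a r * x$r)" using False by simp
      then have "(\<Sum>i\<in>S. a i * \<bar>x$i\<bar>) \<le> - (\<Sum>i\<in>S. a i * x$i) + \<epsilon> * P + F / \<epsilon>"
        using splitA splitL h restle by linarith
      also have "\<dots> \<le> \<bar>K\<^sub>0\<bar> * (1 + T + F) + T * \<bar>B\<bar> + \<epsilon> * P + F / \<epsilon>"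
        using lo K0 tot TB by linarith
      also have "\<dots> \<le> \<epsilon> * P + C * (1 + F + T)"
        using Cge F0 T0 abs_ge_zero[of "\<Psi> - f y1"]
        by (simp add: algebra_simps)
      finally show ?thesis .
    qed
    then show "(\<Sum>i\<in>UNIV-{\<tau>}. pd f x i * \<bar>x $ i\<bar>)
        \<le> \<epsilon> * (\<Sum>i\<in>UNIV-{\<tau>,r}. pd f x i * (x $ i)\<^sup>2)
           + C * (1 + (\<Sum>i\<in>UNIV-{\<tau>}. pd f x i) + pd f x \<tau>)"
      unfolding S' by (simp add: a_def S_def P_def F_def T_def)
  qed
qed

end
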